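(* For every $\alpha\in[3,\omega]$, the set $\mathsf{W}^N_3$ is first-order definable (without parameters) in the structure $(\mathsf{W}^N_\alpha,\prec,\Diamond_1,\Diamond_3)$.
   Context: Words are finite strings over $\mathbb{N}$; $\mathsf{W}_\omega$ is the set of all words, $\Lambda$ the empty word, $AB$ concatenation. For $k\in\mathbb{N}$, $\mathsf{S}_k$ is the set of words all of whose symbols are $\ge k$; for $\alpha\in\mathbb{N}\cup\{\omega\}$, $\mathsf{W}_\alpha$ is the set of words all of whose symbols are $\le\alpha$. Given a linear preorder $\precsim$ with $A\sim B$ iff $A\precsim B\wedge B\precsim A$ and $A\prec B$ iff $A\precsim B\wedge\neg B\precsim A$, a finite sequence $(A_1,\dots,A_p)$ is lexicographically not greater than $(B_1,\dots,B_q)$ iff either $p\le q$ and $A_i\sim B_i$ for all $i\le p$, or there is $s<\min(p,q)$ with $A_i\sim B_i$ for $i\le s$ and $A_{s+1}\prec B_{s+1}$. A lexicographically maximal subsequence of a finite sequence is a subsequence that is lexicographically not less than every subsequence. The linear preorder $\precsim$ on $\mathsf{W}_\omega$ is defined by recursion on (largest symbol of $AB$) $-$ (smallest symbol of $AB$): $\Lambda\precsim\Lambda$; if $AB$ is nonempty with minimal symbol $n$, write uniquely $A=A_1n\cdots nA_k$, $B=B_1n\cdots nB_l$ ($k,l\ge1$) with $A_i,B_j\in\mathsf{S}_{n+1}$ (possibly empty); let $C,D$ be lexicographically maximal subsequences of $(A_1,\dots,A_k)$, $(B_1,\dots,B_l)$; then $A\precsim B$ iff $C$ is lexicographically not greater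 than $D$. The set $\mathsf{NF}$: $\Lambda\in\mathsf{NF}$; a word with minimal symbol $n$, written $A_1n\cdots nA_k$ with $k\ge2$, $A_i\in\mathsf{S}_{n+1}$, is in $\mathsf{NF}$ iff $A_k\precsim\dots\precsim A_1$ and all $A_i\in\mathsf{NF}$. Every word is $\sim$-equivalent to exactly one word of $\mathsf{NF}$. For $A\in\mathsf{NF}$, $\Diamond_nA$ is the unique word of $\mathsf{NF}$ equivalent to $An$. $\mathsf{W}^N_\alpha=\mathsf{W}_\alpha\cap\mathsf{NF}$. *)

theory Defs
  imports Main "HOL-Library.Extended_Nat"
begin

(* Words: finite strings over nat; \<Lambda> = [] ; concatenation = @ *)
type_synonym word = "nat list"

definition S :: "nat \<Rightarrow> word set" where
  "S k = {A. \<forall>x\<in>set A. k \<le> x}"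

(* W_alpha for alpha \<in> N \<union> {omega}, omega = \<infinity> *)
definition W :: "enat \<Rightarrow> word set" where
  "W \<alpha> = {A. \<forall>x\<in>set A. enat x \<le> \<alpha>}"

(* unique decomposition A = A_1 n A_2 n ... n A_k with n not occurring in the A_i *)
fun pieces :: "nat \<Rightarrow> word \<Rightarrow> word list" where
  "pieces n [] = [[]]"
| "pieces n (x # xs) =
     (if x = n then [] # pieces n xs
      else (case pieces n xs of [] \<Rightarrow> [[x]] | p # ps \<Rightarrow> (x # p) # ps))"

definition eqv :: "('a \<Rightarrow> 'a \<Rightarrow> bool) \<Rightarrow> 'a \<Rightarrow> 'a \<Rightarrow> bool" where
  "eqv r a b \<longleftrightarrow> r a b \<and> r b a"

definition strict :: "('a \<Rightarrow> 'a \<Rightarrow> bool) \<Rightarrow> 'a \<Rightarrow> 'a \<Rightarrow> bool" where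
  "strict r a b \<longleftrightarrow> r a b \<and> \<not> r b a"

definition lexle :: "('a \<Rightarrow> 'a \<Rightarrow> bool) \<Rightarrow> 'a list \<Rightarrow> 'a list \<Rightarrow> bool" where
  "lexle r xs ys \<longleftrightarrow>
     (length xs \<le> length ys \<and> (\<forall>i<length xs. eqv r (xs ! i) (ys ! i)))
   \<or> (\<exists>s < min (length xs) (length ys).
        (\<forall>i<s. eqv r (xs ! i) (ys ! i)) \<and> strict r (xs ! s) (ys ! s))"

definition lexmax :: "('a \<Rightarrow> 'a \<Rightarrow> bool) \<Rightarrow> 'a list \<Rightarrow> 'a list \<Rightarrow> bool" where
  "lexmax r xs C \<longleftrightarrow> C \<in> set (subseqs xs) \<and>
     (\<forall>D \<in> set (subseqs xs). \<not> strict (lexle r) C D)"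

definition width :: "word \<Rightarrow> nat" where
  "width A = (if A = [] then 0 else Max (set A) - Min (set A))"

(* The recursion of the paper, run with a fuel argument; the fuel
   Suc (width (A @ B)) used below is always sufficient, so this is exactly
   the recursion on width(AB) of the paper. *)
primrec wleF :: "nat \<Rightarrow> word \<Rightarrow> word \<Rightarrow> bool" where
  "wleF 0 A B = True"
| "wleF (Suc d) A B =
     (if A @ B = [] then True
      else (let n = Min (set (A @ B));
                C = (SOME C. lexmax (wleF d) (pieces n A) C);
                D = (SOME D. lexmax (wleF d) (pieces n B) D)
            in lexle (wleF d) C D))"

definition wle :: "word \<Rightarrow> word \<Rightarrow> bool" where
  "wle A B = wleF (Suc (width (A @ B))) A B"

definition wless :: "word \<Rightarrow> word \<Rightarrow> bool" where
  "wless A B \<longleftrightarrow> wle A B \<and> \<not> wle B A"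

definition wequiv :: "word \<Rightarrow> word \<Rightarrow> bool" where
  "wequiv A B \<longleftrightarrow> wle A B \<and> wle B A"

inductive_set NF :: "word set" where
  NF_Nil: "[] \<in> NF"
| NF_step: "A \<noteq> [] \<Longrightarrow>
     (\<forall>i. Suc i < length (pieces (Min (set A)) A) \<longrightarrow>
          wle (pieces (Min (set A)) A ! Suc i) (pieces (Min (set A)) A ! i)) \<Longrightarrow>
     (\<forall>P \<in> set (pieces (Min (set A)) A). P \<in> NF) \<Longrightarrow> A \<in> NF"

definition diamond :: "nat \<Rightarrow> word \<Rightarrow> word" where
  "diamond n A = (THE B. B \<in> NF \<and> wequiv B (A @ [n]))"

definition WN :: "enat \<Rightarrow> word set" where
  "WN \<alpha> = W \<alpha> \<inter> NF"

(* First-order language with a binary relation symbol (\<prec>) and two unary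
   function symbols (\<Diamond>_1, \<Diamond>_3), equality built in. *)
datatype fterm = FVar nat | FD1 fterm | FD3 fterm

datatype fform =
    FEq fterm fterm
  | FLess fterm fterm
  | FNot fform
  | FAnd fform fform
  | FEx nat fform

fun tvars :: "fterm \<Rightarrow> nat set" where
  "tvars (FVar x) = {x}"
| "tvars (FD1 t) = tvars t"
| "tvars (FD3 t) = tvars t"

fun fvars :: "fform \<Rightarrow> nat set" where
  "fvars (FEq s t) = tvars s \<union> tvars t"
| "fvars (FLess s t) = tvars s \<union> tvars t"
| "fvars (FNot \<phi>) = fvars \<phi>"
| "fvars (FAnd \<phi> \<psi>) = fvars \<phi> \<union> fvars \<psi>"
| "fvars (FEx x \<phi>) = fvars \<phi> - {x}"

fun teval :: "('a \<Rightarrow> 'a) \<Rightarrow> ('a \<Rightarrow> 'a) \<Rightarrow> (nat \<Rightarrow> 'a) \<Rightarrow> fterm \<Rightarrow> 'a" where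
  "teval f1 f3 e (FVar x) = e x"
| "teval f1 f3 e (FD1 t) = f1 (teval f1 f3 e t)"
| "teval f1 f3 e (FD3 t) = f3 (teval f1 f3 e t)"

fun sat :: "'a set \<Rightarrow> ('a \<Rightarrow> 'a \<Rightarrow> bool) \<Rightarrow> ('a \<Rightarrow> 'a) \<Rightarrow> ('a \<Rightarrow> 'a)
             \<Rightarrow> (nat \<Rightarrow> 'a) \<Rightarrow> fform \<Rightarrow> bool" where
  "sat M lt f1 f3 e (FEq s t) = (teval f1 f3 e s = teval f1 f3 e t)"
| "sat M lt f1 f3 e (FLess s t) = lt (teval f1 f3 e s) (teval f1 f3 e t)"
| "sat M lt f1 f3 e (FNot \<phi>) = (\<not> sat M lt f1 f3 e \<phi>)"
| "sat M lt f1 f3 e (FAnd \<phi> \<psi>) = (sat M lt f1 f3 e \<phi> \<and> sat M lt f1 f3 e \<psi>)"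
| "sat M lt f1 f3 e (FEx x \<phi>) = (\<exists>a\<in>M. sat M lt f1 f3 (e(x := a)) \<phi>)"

(* X is definable without parameters in (M, lt, f1, f3): by a formula whose
   only free variable is 0 *)
definition fo_definable :: "'a set \<Rightarrow> ('a \<Rightarrow> 'a \<Rightarrow> bool) \<Rightarrow> ('a \<Rightarrow> 'a) \<Rightarrow> ('a \<Rightarrow> 'a)
                             \<Rightarrow> 'a set \<Rightarrow> bool" where
  "fo_definable M lt f1 f3 X \<longleftrightarrow>
     (\<exists>\<phi>. fvars \<phi> \<subseteq> {0} \<and>
          (\<forall>e. (\<forall>x. e x \<in> M) \<longrightarrow> (e 0 \<in> X \<longleftrightarrow> sat M lt f1 f3 e \<phi>)))"

end

theory Submission
  imports Defs "HOL-Library.Sublist"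
begin


lemma lexle_Nil[simp]: "lexle r [] ys"
  unfolding lexle_def by simp

lemma lexle_Cons_Nil[simp]: "\<not> lexle r (x#xs) []"
  unfolding lexle_def by simp

lemma lexle_Cons_Cons[simp]:
  "lexle r (x#xs) (y#ys) \<longleftrightarrow> strict r x y \<or> (eqv r x y \<and> lexle r xs ys)"
proof
  assume "lexle r (x#xs) (y#ys)"
  then consider "length xs \<le> length ys" "\<forall>i<Suc (length xs). eqv r ((x#xs) ! i) ((y#ys) ! i)"
    | s where "s < Suc (min (length xs) (length ys))" "\<forall>i<s. eqv r ((x#xs) ! i) ((y#ys) ! i)"
        "strict r ((x#xs) ! s) ((y#ys) ! s)"
    unfolding lexle_def by auto
  then show "strict r x y \<or> (eqv r x y \<and> lexle r xs ys)"
  proof cases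
    case 1
    then have "eqv r x y" by (metis nth_Cons_0 zero_less_Suc)
    moreover have "lexle r xs ys" unfolding lexle_def using 1 by fastforce
    ultimately show ?thesis by blast
  next
    case 2
    show ?thesis
    proof (cases s)
      case 0 then show ?thesis using 2 by simp
    next
      case (Suc s')
      then have "eqv r x y" using 2 by (metis nth_Cons_0 zero_less_Suc)
      moreover have "lexle r xs ys" unfolding lexle_def using 2 Suc
        by (intro disjI2 exI[of _ s']) auto
      ultimately show ?thesis by blast
    qed
  qed
next
  assume "strict r x y \<or> (eqv r x y \<and> lexle r xs ys)"
  then consider "strict r x y" | "eqv r x y" "lexle r xs ys" by blast
  then show "lexle r (x#xs) (y#ys)"
  proof cases
    case 1 then show ?thesis unfolding lexle_def by (intro disjI2 exI[of _ 0]) auto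
  next
    case 2
    from 2(2) consider "length xs \<le> length ys" "\<forall>i<length xs. eqv r (xs ! i) (ys ! i)"
      | s where "s < min (length xs) (length ys)" "\<forall>i<s. eqv r (xs ! i) (ys ! i)"
        "strict r (xs ! s) (ys ! s)"
      unfolding lexle_def by auto
    then show ?thesis
    proof cases
      case 1 then show ?thesis unfolding lexle_def using 2(1)
        by (intro disjI1) (auto simp: less_Suc_eq_0_disj)
    next
      case 3: 2
      then show ?thesis unfolding lexle_def using 2(1)
        by (intro disjI2 exI[of _ "Suc s"]) (auto simp: less_Suc_eq_0_disj)
    qed
  qed
qed

definition tp :: "('a \<Rightarrow> 'a \<Rightarrow> bool) \<Rightarrow> 'a set \<Rightarrow> bool" where
  "tp r X \<longleftrightarrow> (\<forall>a\<in>X. \<forall>b\<in>X. r a b \<or> r b a) \<and> (\<forall>a\<in>X. \<forall>b\<in>X. \<forall>c\<in>X. r a b \<longrightarrow> r b c \<longrightarrow> r a c)"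

lemma tp_refl: "tp r X \<Longrightarrow> a \<in> X \<Longrightarrow> r a a"
  unfolding tp_def by blast
lemma tp_total: "tp r X \<Longrightarrow> a \<in> X \<Longrightarrow> b \<in> X \<Longrightarrow> r a b \<or> r b a"
  unfolding tp_def by blast
lemma tp_trans: "tp r X \<Longrightarrow> a \<in> X \<Longrightarrow> b \<in> X \<Longrightarrow> c \<in> X \<Longrightarrow> r a b \<Longrightarrow> r b c \<Longrightarrow> r a c"
  unfolding tp_def by blast

lemma tp_sub: "tp r X \<Longrightarrow> Y \<subseteq> X \<Longrightarrow> tp r Y"
  unfolding tp_def by blast

lemma strict_or_eqv: "r a b \<longleftrightarrow> strict r a b \<or> eqv r a b"
  unfolding strict_def eqv_def by blast

lemma lexle_Cons_mono: "r x y \<Longrightarrow> lexle r xs ys \<Longrightarrow> lexle r (x#xs) (y#ys)"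
  by (auto simp: strict_def eqv_def)

lemma lexle_refl: "(\<forall>a\<in>set xs. r a a) \<Longrightarrow> lexle r xs xs"
  by (induction xs) (auto simp: eqv_def)

lemma lexle_pointwise:
  "length xs \<le> length ys \<Longrightarrow> (\<forall>i<length xs. r (xs!i) (ys!i)) \<Longrightarrow> lexle r xs ys"
proof (induction xs arbitrary: ys)
  case Nil then show ?case by simp
next
  case (Cons x xs)
  then obtain y ys' where ys: "ys = y # ys'" by (cases ys) auto
  show ?case unfolding ys
    apply (rule lexle_Cons_mono)
    using Cons.prems ys apply force
    apply (rule Cons.IH) using Cons.prems ys by auto
qed

lemma lexle_antisym_all2: "lexle r xs ys \<Longrightarrow> lexle r ys xs \<Longrightarrow> list_all2 (eqv r) xs ys"
proof (induction xs arbitrary: ys)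
  case Nil then show ?case by (cases ys) auto
next
  case (Cons x xs) then show ?case by (cases ys) (auto simp: strict_def eqv_def)
qed

lemma all2_lexle: "list_all2 (eqv r) xs ys \<Longrightarrow> lexle r xs ys"
  by (induction rule: list_all2_induct) (auto simp: eqv_def intro: lexle_Cons_mono)

lemma all2_lexle': "list_all2 (eqv r) xs ys \<Longrightarrow> lexle r ys xs"
  by (induction rule: list_all2_induct) (auto simp: eqv_def intro: lexle_Cons_mono)

lemma lexle_total:
  assumes "tp r X" "set xs \<subseteq> X" "set ys \<subseteq> X"
  shows "lexle r xs ys \<or> lexle r ys xs"
  using assms(2,3)
proof (induction xs arbitrary: ys)
  case Nil then show ?case by simp
next
  case (Cons x xs)
  then show ?case
  proof (cases ys)
    case Nil then show ?thesis by simp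
  next
    case (Cons y ys')
    have "r x y \<or> r y x" using assms(1) Cons.prems Cons unfolding tp_def by auto
    moreover have "lexle r xs ys' \<or> lexle r ys' xs" using Cons.IH Cons.prems Cons by auto
    ultimately show ?thesis using Cons by (auto simp: strict_def eqv_def)
  qed
qed

lemma lexle_trans:
  assumes "tp r X" "set xs \<subseteq> X" "set ys \<subseteq> X" "set zs \<subseteq> X"
    "lexle r xs ys" "lexle r ys zs"
  shows "lexle r xs zs"
  using assms(2-)
proof (induction xs arbitrary: ys zs)
  case Nil then show ?case by simp
next
  case (Cons x xs)
  obtain y ys' where ys: "ys = y#ys'" using Cons.prems by (cases ys) auto
  obtain z zs' where zs: "zs = z#zs'" using Cons.prems ys by (cases zs) auto
  have X: "x \<in> X" "y \<in> X" "z \<in> X" using Cons.prems ys zs by auto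
  have tr: "\<And>a b c. a \<in> X \<Longrightarrow> b \<in> X \<Longrightarrow> c \<in> X \<Longrightarrow> r a b \<Longrightarrow> r b c \<Longrightarrow> r a c"
    using assms(1) unfolding tp_def by blast
  have 1: "strict r x y \<or> (eqv r x y \<and> lexle r xs ys')" using Cons.prems ys by simp
  have 2: "strict r y z \<or> (eqv r y z \<and> lexle r ys' zs')" using Cons.prems ys zs by simp
  have IH: "lexle r xs ys' \<Longrightarrow> lexle r ys' zs' \<Longrightarrow> lexle r xs zs'"
    using Cons.IH[of ys' zs'] Cons.prems ys zs by auto
  show ?case unfolding zs using 1 2 IH tr[OF X] tr[of y z x] tr[of z x y] X
    by (auto simp: strict_def eqv_def)
qed

lemma lexle_prefix: "(\<forall>a\<in>set P. r a a) \<Longrightarrow> lexle r (P @ xs) (P @ ys) \<longleftrightarrow> lexle r xs ys"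
  by (induction P) (auto simp: strict_def eqv_def)

lemma lexle_append_self: "(\<forall>a\<in>set xs. r a a) \<Longrightarrow> lexle r xs (xs @ ys)"
  by (induction xs) (auto simp: eqv_def)

lemma not_lexle_append_self: "ys \<noteq> [] \<Longrightarrow> \<not> lexle r (xs @ ys) xs"
  by (induction xs) (auto simp: strict_def eqv_def neq_Nil_conv)

lemma lexle_single[simp]: "lexle r [a] [b] \<longleftrightarrow> r a b"
  by (auto simp: strict_def eqv_def)

definition noninc :: "('a \<Rightarrow> 'a \<Rightarrow> bool) \<Rightarrow> 'a list \<Rightarrow> bool" where
  "noninc r xs \<longleftrightarrow> (\<forall>i. Suc i < length xs \<longrightarrow> r (xs ! Suc i) (xs ! i))"

lemma noninc_Nil[simp]: "noninc r []" and noninc_single[simp]: "noninc r [x]"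
  unfolding noninc_def by auto

lemma noninc_Cons_Cons[simp]: "noninc r (x#y#xs) \<longleftrightarrow> r y x \<and> noninc r (y#xs)"
proof
  assume a: "noninc r (x#y#xs)"
  have "r y x" using a[unfolded noninc_def, rule_format, of 0] by simp
  moreover have "noninc r (y#xs)" unfolding noninc_def
  proof (intro allI impI)
    fix i assume "Suc i < length (y#xs)"
    then show "r ((y#xs) ! Suc i) ((y#xs) ! i)" using a[unfolded noninc_def, rule_format, of "Suc i"] by simp
  qed
  ultimately show "r y x \<and> noninc r (y#xs)" ..
next
  assume a: "r y x \<and> noninc r (y#xs)"
  show "noninc r (x#y#xs)" unfolding noninc_def
  proof (intro allI impI)
    fix i assume i: "Suc i < length (x#y#xs)"
    show "r ((x#y#xs) ! Suc i) ((x#y#xs) ! i)"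
    proof (cases i)
      case 0 then show ?thesis using a by simp
    next
      case (Suc j) then show ?thesis using a[THEN conjunct2, unfolded noninc_def, rule_format, of j] i by simp
    qed
  qed
qed

lemma list_max_exists:
  assumes "L \<noteq> []" "\<And>a b. a \<in> set L \<Longrightarrow> b \<in> set L \<Longrightarrow> R a b \<or> R b a"
    "\<And>a b c. a \<in> set L \<Longrightarrow> b \<in> set L \<Longrightarrow> c \<in> set L \<Longrightarrow> R a b \<Longrightarrow> R b c \<Longrightarrow> R a c"
  shows "\<exists>c\<in>set L. \<forall>d\<in>set L. R d c"
  using assms
proof (induction L)
  case Nil from Nil.prems(1) show ?case by simp
next
  case (Cons x F)
  show ?case
  proof (cases "F = []")
    case True
    have "R x x" using Cons.prems(2)[of x x] by simp
    then show ?thesis unfolding True by simp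
  next
    case False
    have "\<exists>c\<in>set F. \<forall>d\<in>set F. R d c"
      apply (rule Cons.IH[OF False])
       apply (rule Cons.prems(2); simp)
      apply (rule Cons.prems(3); simp)
      done
    then obtain c where c: "c \<in> set F" "\<forall>d\<in>set F. R d c" by blast
    show ?thesis
    proof (cases "R x c")
      case True
      have "\<forall>d\<in>set (x#F). R d c" using True c(2) by simp
      then show ?thesis using c(1) by auto
    next
      case False
      then have Rcx: "R c x" using Cons.prems(2)[of x c] c(1) by auto
      have "\<forall>d\<in>set F. R d x"
      proof
        fix d assume d: "d \<in> set F"
        then have "R d c" using c by blast
        then show "R d x" using Cons.prems(3)[of d c x] d c(1) Rcx by simp
      qed
      moreover have "R x x" using Cons.prems(2)[of x x] by simp
      ultimately show ?thesis by simp
    qed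
  qed
qed

lemma subseq_set: "subseq D xs \<Longrightarrow> set D \<subseteq> set xs"
  by (induction rule: list_emb.induct) auto

lemma lexmax_exists:
  assumes "tp r X" "set xs \<subseteq> X"
  shows "\<exists>C. lexmax r xs C"
proof -
  let ?S = "set (subseqs xs)"
  have sub: "\<forall>D\<in>?S. set D \<subseteq> X" using assms(2) subseq_set by fastforce
  have "\<exists>c\<in>?S. \<forall>d\<in>?S. lexle r d c"
  proof (rule list_max_exists)
    show "subseqs xs \<noteq> []" using subseqs_refl[of xs] by (cases "subseqs xs") simp_all
    fix a b c assume "a \<in> ?S" "b \<in> ?S"
    then show "lexle r a b \<or> lexle r b a" using lexle_total[OF assms(1), of a b] sub by simp
    assume "c \<in> ?S" "lexle r a b" "lexle r b c"
    then show "lexle r a c" using lexle_trans[OF assms(1), of a b c] sub \<open>a \<in> ?S\<close> \<open>b \<in> ?S\<close> by simp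
  qed
  then show ?thesis unfolding lexmax_def strict_def by blast
qed

lemma lexmax_subseq: "lexmax r xs C \<Longrightarrow> subseq C xs"
  unfolding lexmax_def by simp

lemma lexmax_ge:
  assumes "tp r X" "set xs \<subseteq> X" "lexmax r xs C" "subseq D xs"
  shows "lexle r D C"
proof -
  have ns: "\<not> strict (lexle r) C D" using assms(3,4) unfolding lexmax_def by simp
  have sC: "set C \<subseteq> X" using subseq_set[OF lexmax_subseq[OF assms(3)]] assms(2) by (rule order_trans)
  have sD: "set D \<subseteq> X" using subseq_set[OF assms(4)] assms(2) by (rule order_trans)
  have "lexle r C D \<or> lexle r D C" using lexle_total[OF assms(1) sC sD] .
  then show ?thesis using ns unfolding strict_def by blast
qed

lemma lexmax_single: "lexmax r [a] C \<longleftrightarrow> C = [a]"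
proof -
  have s: "set (subseqs [a]) = {[a], []}" by simp
  have n1: "\<not> strict (lexle r) [] [a]" if "False" using that by simp
  have st: "strict (lexle r) [] [a]" unfolding strict_def by simp
  have ns1: "\<not> strict (lexle r) [a] [a]" unfolding strict_def by blast
  have ns2: "\<not> strict (lexle r) [a] []" unfolding strict_def by simp
  show ?thesis unfolding lexmax_def s
  proof
    assume h: "C \<in> {[a], []} \<and> (\<forall>D\<in>{[a], []}. \<not> strict (lexle r) C D)"
    then have "C = [a] \<or> C = []" by blast
    then show "C = [a]" using h st by blast
  next
    assume "C = [a]"
    then show "C \<in> {[a], []} \<and> (\<forall>D\<in>{[a], []}. \<not> strict (lexle r) C D)" using ns1 ns2 by blast
  qed
qed

lemma lexmax_nonempty: assumes "xs \<noteq> []" "lexmax r xs C" shows "C \<noteq> []"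
proof
  assume C: "C = []"
  have "subseq [hd xs] xs" using assms(1) by (simp add: subseq_singleton_left)
  moreover have "strict (lexle r) [] [hd xs]" by (simp add: strict_def)
  ultimately show False using assms(2) C unfolding lexmax_def by simp
qed

lemma noninc_Cons_ge: "noninc r (x#xs) \<Longrightarrow> tp r X \<Longrightarrow> set (x#xs) \<subseteq> X \<Longrightarrow> lexle r xs (x#xs)"
proof (induction xs arbitrary: x)
  case Nil then show ?case by simp
next
  case (Cons y ys)
  have "r y x" using Cons.prems(1) by simp
  moreover have "lexle r ys (y#ys)"
    apply (rule Cons.IH) using Cons.prems by simp_all
  ultimately show ?case by (rule lexle_Cons_mono)
qed

lemma subseq_Cons_cases:
  assumes "subseq D (x#xs)"
  shows "(\<exists>D'. D = x#D' \<and> subseq D' xs) \<or> subseq D xs"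
proof (cases D)
  case Nil then show ?thesis by simp
next
  case (Cons a D')
  show ?thesis
  proof (cases "a = x")
    case True
    have "subseq D' xs" using assms unfolding Cons True by (rule subseq_Cons2')
    then show ?thesis using Cons True by blast
  next
    case False
    have "subseq D xs" using subseq_Cons2_neq[OF assms[unfolded Cons] False] Cons by simp
    then show ?thesis by blast
  qed
qed

lemma noninc_ge_subseq:
  assumes "tp r X" "set xs \<subseteq> X" "noninc r xs" "subseq D xs"
  shows "lexle r D xs"
  using assms(2-)
proof (induction xs arbitrary: D)
  case Nil then show ?case by (cases D) auto
next
  case (Cons x xs)
  have nx: "noninc r xs" using Cons.prems(2) by (cases xs) simp_all
  have sx: "set xs \<subseteq> X" using Cons.prems(1) by simp
  from subseq_Cons_cases[OF Cons.prems(3)] consider D' where "D = x # D'" "subseq D' xs" | "subseq D xs"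
    by blast
  then show ?case
  proof cases
    case 1
    have "r x x" using tp_refl[OF assms(1)] Cons.prems(1) by simp
    moreover have "lexle r D' xs" using Cons.IH[OF sx nx 1(2)] .
    ultimately show ?thesis unfolding 1(1) by (rule lexle_Cons_mono)
  next
    case 2
    then have a: "lexle r D xs" using Cons.IH[OF sx nx] by blast
    moreover have b: "lexle r xs (x#xs)" using noninc_Cons_ge[OF Cons.prems(2) assms(1) Cons.prems(1)] .
    have sD: "set D \<subseteq> X" using subseq_set[OF 2] sx by blast
    show ?thesis using lexle_trans[OF assms(1) sD sx Cons.prems(1) a b] .
  qed
qed

lemma noninc_lexmax:
  assumes "tp r X" "set xs \<subseteq> X" "noninc r xs"
  shows "lexmax r xs xs"
  unfolding lexmax_def
proof
  show "xs \<in> set (subseqs xs)" by (rule subseqs_refl)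
  show "\<forall>D\<in>set (subseqs xs). \<not> strict (lexle r) xs D"
  proof
    fix D assume "D \<in> set (subseqs xs)"
    then have "lexle r D xs" using noninc_ge_subseq[OF assms] by simp
    then show "\<not> strict (lexle r) xs D" unfolding strict_def by blast
  qed
qed

lemma lexmax_noninc:
  assumes "tp r X" "set xs \<subseteq> X" "lexmax r xs C"
  shows "noninc r C"
  unfolding noninc_def
proof (intro allI impI, rule ccontr)
  fix i assume i: "Suc i < length C" and nr: "\<not> r (C ! Suc i) (C ! i)"
  have subC: "subseq C xs" using lexmax_subseq[OF assms(3)] .
  have sC: "set C \<subseteq> X" using subseq_set[OF subC] assms(2) by (rule order_trans)
  have Ci: "C!i \<in> X" "C ! Suc i \<in> X" using sC i by auto
  then have st: "strict r (C!i) (C!Suc i)" using nr tp_total[OF assms(1) Ci(1) Ci(2)] unfolding strict_def by blast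
  obtain P R a b where C: "C = P @ a # b # R" and ab: "a = C!i" "b = C!Suc i" and P: "P = take i C"
    using i by (metis Cons_nth_drop_Suc Suc_lessD append_take_drop_id)
  have "subseq (P @ b # R) (P @ a # b # R)" unfolding subseq_append'
    by (rule list_emb_Cons) (rule subseq_order.order_refl)
  then have sub: "subseq (P @ b # R) xs" using subC unfolding C by (rule subseq_order.order_trans)
  have "set P \<subseteq> X" using sC unfolding C by simp
  then have rP: "\<forall>a\<in>set P. r a a" using tp_refl[OF assms(1)] by blast
  have st': "strict r a b" using st ab by simp
  have "strict (lexle r) C (P @ b # R)"
    unfolding strict_def C lexle_prefix[of P r, OF rP]
    using st' by (simp add: strict_def eqv_def)
  moreover have "(P @ b # R) \<in> set (subseqs xs)" using sub by simp
  ultimately show False using assms(3) unfolding lexmax_def by blast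
qed



section \<open>pieces\<close>

lemma pieces_ne[simp]: "pieces n xs \<noteq> []"
  by (induction xs) (auto split: list.split)

lemma pieces_set: "p \<in> set (pieces n xs) \<Longrightarrow> n \<notin> set p \<and> set p \<subseteq> set xs"
proof (induction xs arbitrary: p)
  case Nil then show ?case by simp
next
  case (Cons x xs)
  show ?case
  proof (cases "x = n")
    case True then show ?thesis using Cons by auto
  next
    case False
    obtain q qs where q: "pieces n xs = q # qs" using pieces_ne[of n xs] by (cases "pieces n xs") auto
    have "p = x # q \<or> p \<in> set qs" using Cons.prems False q by simp
    moreover have "n \<notin> set q \<and> set q \<subseteq> set xs" using Cons.IH[of q] q by simp
    moreover have "p \<in> set qs \<Longrightarrow> n \<notin> set p \<and> set p \<subseteq> set xs" using Cons.IH[of p] q by simp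
    ultimately show ?thesis using False by auto
  qed
qed

lemma pieces_notin: "n \<notin> set xs \<Longrightarrow> pieces n xs = [xs]"
  by (induction xs) auto

lemma pieces_snoc_eq: "pieces n (xs @ [n]) = pieces n xs @ [[]]"
proof (induction xs)
  case Nil then show ?case by simp
next
  case (Cons x xs)
  obtain q qs where q: "pieces n xs = q # qs" using pieces_ne[of n xs] by (cases "pieces n xs") auto
  show ?case using Cons q by simp
qed

lemma pieces_snoc_neq: "x \<noteq> n \<Longrightarrow>
  pieces n (xs @ [x]) = butlast (pieces n xs) @ [last (pieces n xs) @ [x]]"
proof (induction xs)
  case Nil then show ?case by simp
next
  case (Cons y xs)
  obtain q qs where q: "pieces n xs = q # qs" using pieces_ne[of n xs] by (cases "pieces n xs") auto
  show ?case
  proof (cases "y = n")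
    case True then show ?thesis using Cons q by simp
  next
    case False
    show ?thesis
    proof (cases qs)
      case Nil then show ?thesis using Cons q False by simp
    next
      case (Cons q' qs')
      then show ?thesis using Cons.IH Cons.prems q False by simp
    qed
  qed
qed

lemma pieces_len_ge: "length (pieces n xs) \<ge> 1"
  using pieces_ne[of n xs] by (cases "pieces n xs") auto

lemma pieces_len2: "n \<in> set xs \<Longrightarrow> length (pieces n xs) \<ge> 2"
proof (induction xs)
  case Nil then show ?case by simp
next
  case (Cons x xs)
  obtain q qs where q: "pieces n xs = q # qs" using pieces_ne[of n xs] by (cases "pieces n xs") auto
  show ?case
  proof (cases "x = n")
    case True then show ?thesis using q by simp
  next
    case False then show ?thesis using Cons q by simp
  qed
qed

lemma pieces_len2_in: "length (pieces n xs) \<ge> 2 \<Longrightarrow> n \<in> set xs"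
  using pieces_notin[of n xs] by fastforce

lemma pieces_length: "p \<in> set (pieces n xs) \<Longrightarrow> length p \<le> length xs \<and> (n \<in> set xs \<longrightarrow> length p < length xs)"
proof (induction xs arbitrary: p)
  case Nil then show ?case by simp
next
  case (Cons x xs)
  obtain q qs where q: "pieces n xs = q # qs" using pieces_ne[of n xs] by (cases "pieces n xs") auto
  show ?case
  proof (cases "x = n")
    case True
    then have "p = [] \<or> p \<in> set (pieces n xs)" using Cons.prems by simp
    then show ?thesis using Cons.IH[of p] by auto
  next
    case False
    have "p = x # q \<or> p \<in> set qs" using Cons.prems False q by simp
    then show ?thesis using Cons.IH[of q] Cons.IH[of p] q False by auto
  qed
qed


fun join :: "nat \<Rightarrow> word list \<Rightarrow> word" where
  "join n [] = []"
| "join n [p] = p"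
| "join n (p#q#ps) = p @ n # join n (q#ps)"

lemma join_Cons_hd: "join n ((x#q)#qs) = x # join n (q#qs)"
  by (cases qs) auto

lemma join_pieces: "join n (pieces n xs) = xs"
proof (induction xs)
  case Nil then show ?case by simp
next
  case (Cons x xs)
  obtain q qs where q: "pieces n xs = q # qs" using pieces_ne[of n xs] by (cases "pieces n xs") auto
  show ?case
  proof (cases "x = n")
    case True then show ?thesis using Cons q by simp
  next
    case False then show ?thesis using Cons q by (simp add: join_Cons_hd)
  qed
qed

lemma pieces_inj: "pieces n A = pieces n B \<Longrightarrow> A = B"
  by (metis join_pieces)

lemma pieces_sep: "n \<notin> set p \<Longrightarrow> pieces n (p @ n # ys) = p # pieces n ys"
proof (induction p)
  case Nil then show ?case by simp
next
  case (Cons x p) then show ?case by simp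
qed

lemma pieces_join: "ps \<noteq> [] \<Longrightarrow> \<forall>p\<in>set ps. n \<notin> set p \<Longrightarrow> pieces n (join n ps) = ps"
proof (induction n ps rule: join.induct)
  case (1 n) then show ?case by simp
next
  case (2 n p) then show ?case by (simp add: pieces_notin)
next
  case (3 n p q ps) then show ?case by (simp add: pieces_sep)
qed

lemma join_set: "set (join n ps) \<subseteq> insert n (\<Union> (set ` set ps))"
  by (induction n ps rule: join.induct) auto

lemma join_set2: "length ps \<ge> 2 \<Longrightarrow> n \<in> set (join n ps)"
  by (induction n ps rule: join.induct) auto

lemma join_set_ge: "set p \<subseteq> set (join n ps)" if "p \<in> set ps"
  using that by (induction n ps rule: join.induct) auto

lemma piece_member: "x \<in> set xs \<Longrightarrow> x \<noteq> n \<Longrightarrow> \<exists>p\<in>set (pieces n xs). x \<in> set p"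
  using join_set[of n "pieces n xs"] unfolding join_pieces by blast

lemma width_lt:
  assumes "U' \<noteq> []" "set U' \<subseteq> set U" "n = Min (set U)" "n \<notin> set U'"
  shows "width U' < width U"
proof -
  have U: "U \<noteq> []" using assms(1,2) by auto
  have f: "finite (set U)" "finite (set U')" by auto
  have ne: "set U \<noteq> {}" "set U' \<noteq> {}" using U assms(1) by auto
  have a: "Max (set U') \<le> Max (set U)" using Max_mono[OF assms(2) ne(2) f(1)] .
  have b: "Min (set U') \<le> Max (set U')" using Min_le[OF f(2) Max_in[OF f(2) ne(2)]] .
  have c: "Min (set U') \<in> set U'" using Min_in[OF f(2) ne(2)] .
  have "n \<le> Min (set U')" using assms(2,3) c f(1) by (metis Min_le in_mono)
  moreover have "n \<noteq> Min (set U')" using c assms(4) by auto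
  ultimately have d: "Suc n \<le> Min (set U')" by simp
  have w1: "width U' = Max (set U') - Min (set U')" using assms(1) by (simp add: width_def)
  have w2: "width U = Max (set U) - Min (set U)" using U by (simp add: width_def)
  show ?thesis unfolding w1 w2 using a b d assms(3) by linarith
qed

lemma lexle_cong:
  "(\<forall>a\<in>set xs. \<forall>b\<in>set ys. r a b = r' a b \<and> r b a = r' b a) \<Longrightarrow> lexle r xs ys = lexle r' xs ys"
proof (induction xs arbitrary: ys)
  case Nil then show ?case by simp
next
  case (Cons x xs)
  show ?case
  proof (cases ys)
    case Nil then show ?thesis by simp
  next
    case (Cons y ys')
    have "lexle r xs ys' = lexle r' xs ys'" using Cons.IH[of ys'] Cons.prems Cons by simp
    moreover have "r x y = r' x y" "r y x = r' y x" using Cons.prems Cons by auto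
    ultimately show ?thesis using Cons by (simp add: strict_def eqv_def)
  qed
qed

lemma lexmax_cong:
  assumes "\<forall>a\<in>set xs. \<forall>b\<in>set xs. r a b = r' a b"
  shows "lexmax r xs = lexmax r' xs"
proof
  fix C
  have "\<And>D. subseq C xs \<Longrightarrow> subseq D xs \<Longrightarrow> strict (lexle r) C D = strict (lexle r') C D"
  proof -
    fix D assume "subseq C xs" "subseq D xs"
    then have "set C \<subseteq> set xs" "set D \<subseteq> set xs" using subseq_set by auto
    then have "lexle r C D = lexle r' C D" "lexle r D C = lexle r' D C"
      using assms by (auto intro!: lexle_cong)
    then show "strict (lexle r) C D = strict (lexle r') C D" unfolding strict_def by simp
  qed
  then show "lexmax r xs C = lexmax r' xs C" unfolding lexmax_def by auto
qed

definition L :: "nat \<Rightarrow> word \<Rightarrow> word list" where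
  "L m A = (SOME C. lexmax wle (pieces m A) C)"

lemma wleF_Nil: "wleF d [] [] = True"
  by (cases d) auto

lemma wle_Nil[simp]: "wle [] []"
  unfolding wle_def by simp

lemma step_unfold:
  assumes "A @ B \<noteq> []" "n = Min (set (A @ B))"
    and agree: "\<forall>P\<in>set (pieces n A) \<union> set (pieces n B). \<forall>Q\<in>set (pieces n A) \<union> set (pieces n B). wleF d P Q = wle P Q"
    and tpX: "tp wle (set (pieces n A) \<union> set (pieces n B))"
  shows "wleF (Suc d) A B = lexle wle (L n A) (L n B)"
proof -
  have eA: "lexmax (wleF d) (pieces n A) = lexmax wle (pieces n A)"
    by (rule lexmax_cong) (use agree in blast)
  have eB: "lexmax (wleF d) (pieces n B) = lexmax wle (pieces n B)"
    by (rule lexmax_cong) (use agree in blast)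
  have mA: "lexmax wle (pieces n A) (L n A)" unfolding L_def
    by (rule someI_ex, rule lexmax_exists[OF tpX]) auto
  have mB: "lexmax wle (pieces n B) (L n B)" unfolding L_def
    by (rule someI_ex, rule lexmax_exists[OF tpX]) auto
  have sA: "set (L n A) \<subseteq> set (pieces n A)" using subseq_set[OF lexmax_subseq[OF mA]] .
  have sB: "set (L n B) \<subseteq> set (pieces n B)" using subseq_set[OF lexmax_subseq[OF mB]] .
  have e1: "(SOME C. lexmax (wleF d) (pieces n A) C) = L n A" unfolding L_def eA ..
  have e2: "(SOME C. lexmax (wleF d) (pieces n B) C) = L n B" unfolding L_def eB ..
  have "wleF (Suc d) A B = lexle (wleF d) (SOME C. lexmax (wleF d) (pieces n A) C) (SOME C. lexmax (wleF d) (pieces n B) C)"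
    using assms(1,2) by (simp only: wleF.simps Let_def if_False)
  then have "wleF (Suc d) A B = lexle (wleF d) (L n A) (L n B)" unfolding e1 e2 .
  also have "\<dots> = lexle wle (L n A) (L n B)"
    apply (rule lexle_cong) using agree sA sB by blast
  finally show ?thesis .
qed


definition D :: "nat \<Rightarrow> nat \<Rightarrow> word set" where
  "D a b = {A. \<forall>x\<in>set A. a \<le> x \<and> x \<le> b}"

lemma pieces_D:
  assumes "P \<in> D a b" "\<forall>x\<in>set P. m \<le> x" "p \<in> set (pieces m P)"
  shows "p \<in> D (Suc m) b"
proof -
  have h: "m \<notin> set p" "set p \<subseteq> set P" using pieces_set[OF assms(3)] by auto
  have "Suc m \<le> x \<and> x \<le> b" if x: "x \<in> set p" for x
  proof -
    have "x \<in> set P" using x h by blast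
    then have "m \<le> x" "x \<le> b" using assms(1,2) unfolding D_def by auto
    moreover have "m \<noteq> x" using x h by blast
    ultimately show ?thesis by simp
  qed
  then show ?thesis unfolding D_def by blast
qed

lemma L_single: "m \<notin> set P \<Longrightarrow> L m P = [P]"
proof -
  assume "m \<notin> set P"
  then have p: "pieces m P = [P]" by (rule pieces_notin)
  have "lexmax wle [P] = (\<lambda>C. C = [P])" by (rule ext) (simp add: lexmax_single)
  then show "L m P = [P]" unfolding L_def p by simp
qed

lemma L_lexmax: "tp wle X \<Longrightarrow> set (pieces m P) \<subseteq> X \<Longrightarrow> lexmax wle (pieces m P) (L m P)"
  unfolding L_def by (rule someI_ex, rule lexmax_exists)

lemma L_set: "tp wle X \<Longrightarrow> set (pieces m P) \<subseteq> X \<Longrightarrow> set (L m P) \<subseteq> set (pieces m P)"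
  using subseq_set[OF lexmax_subseq[OF L_lexmax]] by blast

lemma L_Nil: "L m [] = [[]]"
  using L_single[of m "[]"] by simp

definition FU :: "nat \<Rightarrow> nat \<Rightarrow> bool" where
  "FU a b \<longleftrightarrow> (\<forall>P\<in>D a b. \<forall>Q\<in>D a b. \<forall>d. width (P @ Q) < d \<longrightarrow> wleF d P Q = wle P Q)"

definition KK :: "nat \<Rightarrow> nat \<Rightarrow> bool" where
  "KK a b \<longleftrightarrow> (\<forall>P\<in>D a b. \<forall>Q\<in>D a b. \<forall>m. (\<forall>x\<in>set (P @ Q). m \<le> x) \<longrightarrow>
      wle P Q = lexle wle (L m P) (L m Q))"

lemma main: "tp wle (D a b) \<and> FU a b \<and> KK a b"
proof (induction "Suc b - a" arbitrary: a b rule: less_induct)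
  case less
  have IH: "tp wle (D (Suc m) b) \<and> FU (Suc m) b \<and> KK (Suc m) b" if "a \<le> m" "m \<le> b" for m
    using less that by simp
  have K0: "wleF (Suc d) P Q = lexle wle (L (Min (set (P @ Q))) P) (L (Min (set (P @ Q))) Q)"
    if PQ: "P \<in> D a b" "Q \<in> D a b" "P @ Q \<noteq> []" "width (P @ Q) \<le> d" for P Q d
  proof -
    define n where "n = Min (set (P @ Q))"
    define X where "X = set (pieces n P) \<union> set (pieces n Q)"
    have fin: "finite (set (P @ Q))" "set (P @ Q) \<noteq> {}" using PQ(3) by auto
    have nmin: "\<forall>x\<in>set (P @ Q). n \<le> x" unfolding n_def using Min_le[OF fin(1)] by blast
    have nin: "n \<in> set (P @ Q)" unfolding n_def using Min_in[OF fin] .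
    have an: "a \<le> n" "n \<le> b" using nin PQ(1,2) unfolding D_def by auto
    note IHn = IH[OF an]
    have XD: "X \<subseteq> D (Suc n) b" unfolding X_def
      using pieces_D[OF PQ(1)] pieces_D[OF PQ(2)] nmin by auto
    have tpX: "tp wle X" using tp_sub[OF _ XD] IHn by blast
    have agree: "\<forall>P'\<in>X. \<forall>Q'\<in>X. wleF d P' Q' = wle P' Q'"
    proof (intro ballI)
      fix P' Q' assume P'Q': "P' \<in> X" "Q' \<in> X"
      show "wleF d P' Q' = wle P' Q'"
      proof (cases "P' @ Q' = []")
        case True then show ?thesis by (simp add: wleF_Nil)
      next
        case False
        have s: "n \<notin> set P' \<and> set P' \<subseteq> set P \<or> n \<notin> set P' \<and> set P' \<subseteq> set Q"
          using P'Q'(1) pieces_set unfolding X_def by blast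
        have s2: "n \<notin> set Q' \<and> set Q' \<subseteq> set P \<or> n \<notin> set Q' \<and> set Q' \<subseteq> set Q"
          using P'Q'(2) pieces_set unfolding X_def by blast
        have "width (P' @ Q') < width (P @ Q)"
          apply (rule width_lt[OF False _ n_def])
          using s s2 by auto
        then have "width (P' @ Q') < d" using PQ(4) by simp
        moreover have "P' \<in> D (Suc n) b" "Q' \<in> D (Suc n) b" using XD P'Q' by auto
        ultimately show ?thesis using IHn unfolding FU_def by blast
      qed
    qed
    show ?thesis unfolding n_def[symmetric]
      apply (rule step_unfold[OF PQ(3) n_def])
      using agree unfolding X_def apply blast
      using tpX unfolding X_def .
  qed
  have FUab: "FU a b" unfolding FU_def
  proof (intro ballI allI impI)
    fix P Q d assume PQ: "P \<in> D a b" "Q \<in> D a b" "width (P @ Q) < d"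
    show "wleF d P Q = wle P Q"
    proof (cases "P @ Q = []")
      case True then show ?thesis by (simp add: wleF_Nil)
    next
      case False
      obtain d' where d: "d = Suc d'" using PQ(3) by (cases d) auto
      have wd: "width (P @ Q) \<le> d'" using PQ(3) d by simp
      have "wleF d P Q = lexle wle (L (Min (set (P @ Q))) P) (L (Min (set (P @ Q))) Q)"
        unfolding d using K0[OF PQ(1,2) False wd] .
      moreover have "wle P Q = wleF (Suc (width (P @ Q))) P Q" by (simp only: wle_def)
      moreover have "wleF (Suc (width (P @ Q))) P Q = lexle wle (L (Min (set (P @ Q))) P) (L (Min (set (P @ Q))) Q)"
        using K0[OF PQ(1,2) False le_refl] .
      ultimately show ?thesis by simp
    qed
  qed
  have Kmin: "wle P Q = lexle wle (L (Min (set (P @ Q))) P) (L (Min (set (P @ Q))) Q)"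
    if "P \<in> D a b" "Q \<in> D a b" "P @ Q \<noteq> []" for P Q
  proof -
    have "wle P Q = wleF (Suc (width (P @ Q))) P Q" by (simp only: wle_def)
    then show ?thesis using K0[OF that le_refl] by simp
  qed
  have KKab: "KK a b" unfolding KK_def
  proof (intro ballI allI impI)
    fix P Q m assume PQ: "P \<in> D a b" "Q \<in> D a b" and m: "\<forall>x\<in>set (P @ Q). m \<le> x"
    show "wle P Q = lexle wle (L m P) (L m Q)"
    proof (cases "P @ Q = []")
      case True then show ?thesis by (simp add: L_Nil eqv_def)
    next
      case False
      show ?thesis
      proof (cases "m \<in> set (P @ Q)")
        case True
        have "m = Min (set (P @ Q))" by (rule Min_eqI[symmetric]) (use m True in auto)
        then show ?thesis using Kmin[OF PQ False] by simp
      next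
        case nm: False
        then have "L m P = [P]" "L m Q = [Q]" using L_single by auto
        then show ?thesis by (simp add: strict_def eqv_def) blast
      qed
    qed
  qed
  have tpab: "tp wle (D a b)" unfolding tp_def
  proof (intro conjI ballI impI)
    fix P Q assume PQ: "P \<in> D a b" "Q \<in> D a b"
    show "wle P Q \<or> wle Q P"
    proof (cases "P @ Q = []")
      case True then show ?thesis by simp
    next
      case False
      define n where "n = Min (set (P @ Q))"
      have fin: "finite (set (P @ Q))" "set (P @ Q) \<noteq> {}" using False by auto
      have nmin: "\<forall>x\<in>set (P @ Q). n \<le> x" unfolding n_def using Min_le[OF fin(1)] by blast
      have nin: "n \<in> set (P @ Q)" unfolding n_def using Min_in[OF fin] .
      have an: "a \<le> n" "n \<le> b" using nin PQ(1,2) unfolding D_def by auto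
      have tpn: "tp wle (D (Suc n) b)" using IH[OF an] by blast
      have sP: "set (pieces n P) \<subseteq> D (Suc n) b" using pieces_D[OF PQ(1)] nmin by auto
      have sQ: "set (pieces n Q) \<subseteq> D (Suc n) b" using pieces_D[OF PQ(2)] nmin by auto
      have "lexle wle (L n P) (L n Q) \<or> lexle wle (L n Q) (L n P)"
        apply (rule lexle_total[OF tpn])
        using L_set[OF tpn sP] sP apply blast
        using L_set[OF tpn sQ] sQ by blast
      moreover have "wle P Q = lexle wle (L n P) (L n Q)" using Kmin[OF PQ False] n_def by simp
      moreover have "wle Q P = lexle wle (L n Q) (L n P)"
        using KKab PQ nmin unfolding KK_def by auto
      ultimately show ?thesis by simp
    qed
  next
    fix P Q R assume PQR: "P \<in> D a b" "Q \<in> D a b" "R \<in> D a b" "wle P Q" "wle Q R"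
    show "wle P R"
    proof (cases "P @ Q @ R = []")
      case True then show ?thesis by simp
    next
      case False
      define n where "n = Min (set (P @ Q @ R))"
      have fin: "finite (set (P @ Q @ R))" "set (P @ Q @ R) \<noteq> {}" using False by auto
      have nmin: "\<forall>x\<in>set (P @ Q @ R). n \<le> x" unfolding n_def using Min_le[OF fin(1)] by blast
      have nin: "n \<in> set (P @ Q @ R)" unfolding n_def using Min_in[OF fin] .
      have an: "a \<le> n" "n \<le> b" using nin PQR(1-3) unfolding D_def by auto
      have tpn: "tp wle (D (Suc n) b)" using IH[OF an] by blast
      have sP: "set (pieces n P) \<subseteq> D (Suc n) b" using pieces_D[OF PQR(1)] nmin by auto
      have sQ: "set (pieces n Q) \<subseteq> D (Suc n) b" using pieces_D[OF PQR(2)] nmin by auto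
      have sR: "set (pieces n R) \<subseteq> D (Suc n) b" using pieces_D[OF PQR(3)] nmin by auto
      have k1: "lexle wle (L n P) (L n Q)" using KKab PQR nmin unfolding KK_def by auto
      have k2: "lexle wle (L n Q) (L n R)" using KKab PQR nmin unfolding KK_def by auto
      have "lexle wle (L n P) (L n R)"
        apply (rule lexle_trans[OF tpn _ _ _ k1 k2])
        using L_set[OF tpn sP] sP apply blast
        using L_set[OF tpn sQ] sQ apply blast
        using L_set[OF tpn sR] sR by blast
      then show ?thesis using KKab PQR nmin unfolding KK_def by auto
    qed
  qed
  show ?case using tpab FUab KKab by blast
qed

lemma in_D_sum: "set P \<subseteq> set Z \<Longrightarrow> P \<in> D 0 (sum_list Z)"
  unfolding D_def using member_le_sum_list by fastforce

lemma tp_wle: "tp wle UNIV"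
  unfolding tp_def
proof (intro conjI ballI impI)
  fix P Q
  have t: "tp wle (D 0 (sum_list (P @ Q)))" using main by blast
  show "wle P Q \<or> wle Q P"
    by (rule tp_total[OF t]) (rule in_D_sum, force)+
next
  fix P Q R assume "wle P Q" "wle Q R"
  have t: "tp wle (D 0 (sum_list (P @ Q @ R)))" using main by blast
  show "wle P R"
    apply (rule tp_trans[OF t _ _ _ \<open>wle P Q\<close> \<open>wle Q R\<close>])
    by (rule in_D_sum, force)+
qed

lemma wle_refl[simp]: "wle A A"
  using tp_refl[OF tp_wle] by blast

lemma wle_total: "wle A B \<or> wle B A"
  using tp_total[OF tp_wle] by blast

lemma wle_trans: "wle A B \<Longrightarrow> wle B C \<Longrightarrow> wle A C"
  using tp_trans[OF tp_wle] by blast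

lemma K: assumes "\<forall>x\<in>set (P @ Q). m \<le> x" shows "wle P Q = lexle wle (L m P) (L m Q)"
proof -
  have k: "KK 0 (sum_list (P @ Q))" using main by blast
  have "P \<in> D 0 (sum_list (P @ Q))" "Q \<in> D 0 (sum_list (P @ Q))" by (rule in_D_sum, force)+
  then show ?thesis using k assms unfolding KK_def by blast
qed

lemma L_max: "lexmax wle (pieces m P) (L m P)"
  using L_lexmax[OF tp_wle] by blast

lemma L_subseq: "subseq (L m P) (pieces m P)"
  using lexmax_subseq[OF L_max] .

lemma L_ge: "subseq E (pieces m P) \<Longrightarrow> lexle wle E (L m P)"
  using lexmax_ge[OF tp_wle _ L_max] by blast



lemma LT: "lexle wle xs ys \<Longrightarrow> lexle wle ys zs \<Longrightarrow> lexle wle xs zs"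
  by (rule lexle_trans[OF tp_wle]) auto

lemma LTot: "lexle wle xs ys \<or> lexle wle ys xs"
  by (rule lexle_total[OF tp_wle]) auto

lemma LRefl[simp]: "lexle wle xs xs"
  by (rule lexle_refl) simp

lemma lexle_snoc1: "lexle wle (E @ [a]) (E @ [b]) \<longleftrightarrow> wle a b"
  by (simp add: lexle_prefix strict_def eqv_def) blast

lemma lexle_snoc2: "wless a b \<Longrightarrow> lexle wle (E @ [a, c]) (E @ [b])"
  by (simp add: lexle_prefix strict_def wless_def)

lemma subseq_snoc_cases:
  assumes "subseq E (xs @ [x])"
  shows "subseq E xs \<or> (\<exists>E'. E = E' @ [x] \<and> subseq E' xs)"
proof -
  obtain E1 E2 where e: "E = E1 @ E2" "subseq E1 xs" "subseq E2 [x]"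
    using assms by (auto elim: subseq_appendE)
  have "E2 = [] \<or> E2 = [x]"
  proof (cases E2)
    case Nil then show ?thesis by simp
  next
    case (Cons a E2')
    then show ?thesis using e(3) by (cases "a = x") auto
  qed
  then show ?thesis using e by auto
qed

lemma L_ne: "L m P \<noteq> []"
  using lexmax_nonempty[OF pieces_ne L_max] .

lemma L_elem: "c \<in> set (L m P) \<Longrightarrow> c \<in> set (pieces m P)"
  using subseq_set[OF L_subseq] by blast

lemma wle_Nil_le: "wle [] X"
proof (induction "length X" arbitrary: X rule: less_induct)
  case less
  show ?case
  proof (cases "X = []")
    case True then show ?thesis by simp
  next
    case False
    define m where "m = Min (set X)"
    have fin: "finite (set X)" "set X \<noteq> {}" using False by auto
    have mmin: "\<forall>x\<in>set ([] @ X). m \<le> x" unfolding m_def using Min_le[OF fin(1)] by simp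
    have min: "m \<in> set X" unfolding m_def using Min_in[OF fin] .
    obtain c C' where c: "L m X = c # C'" using L_ne[of m X] by (cases "L m X") auto
    have "c \<in> set (pieces m X)" using L_elem[of c m X] c by simp
    then have "length c < length X" using pieces_length min by blast
    then have "wle [] c" using less by blast
    then have "lexle wle [[]] (L m X)" unfolding c by (rule lexle_Cons_mono) simp
    then show ?thesis using K[OF mmin] L_Nil by simp
  qed
qed

lemma wless_Nil: assumes "X \<noteq> []" shows "wless [] X"
proof -
  define m where "m = Min (set X)"
  have fin: "finite (set X)" "set X \<noteq> {}" using assms by auto
  have mmin: "\<forall>x\<in>set (X @ []). m \<le> x" unfolding m_def using Min_le[OF fin(1)] by simp
  have min: "m \<in> set X" unfolding m_def using Min_in[OF fin] .
  have "length (pieces m X) \<ge> 2" using pieces_len2[OF min] .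
  then obtain p1 p2 ps where ps: "pieces m X = p1 # p2 # ps"
    by (metis One_nat_def Suc_1 Suc_le_length_iff)
  have "\<not> wle X []"
  proof
    assume "wle X []"
    then have "lexle wle (L m X) [[]]" using K[OF mmin] L_Nil by simp
    moreover have "lexle wle (pieces m X) (L m X)" by (rule L_ge) simp
    ultimately have "lexle wle (p1 # p2 # ps) [[]]" using LT ps by metis
    then show False using wle_Nil_le[of p1] by (simp add: strict_def eqv_def)
  qed
  then show ?thesis unfolding wless_def using wle_Nil_le by simp
qed

lemma wless_witness:
  assumes "\<forall>x\<in>set (A @ B). m \<le> x" "subseq E (pieces m B)"
    "lexle wle (L m A) E" "\<not> lexle wle E (L m A)"
  shows "wless A B"
proof -
  have "lexle wle E (L m B)" using L_ge[OF assms(2)] .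
  then have 1: "lexle wle (L m A) (L m B)" using assms(3) LT by blast
  have 2: "\<not> lexle wle (L m B) (L m A)" using assms(4) LT \<open>lexle wle E (L m B)\<close> by blast
  have "\<forall>x\<in>set (B @ A). m \<le> x" using assms(1) by auto
  then show ?thesis unfolding wless_def using K[OF assms(1)] K[of B A m] 1 2 by simp
qed

lemma wle_witness:
  assumes "\<forall>x\<in>set (A @ B). m \<le> x"
    "\<And>E. subseq E (pieces m A) \<Longrightarrow> \<exists>F. subseq F (pieces m B) \<and> lexle wle E F"
  shows "wle A B"
proof -
  obtain F where F: "subseq F (pieces m B)" "lexle wle (L m A) F" using assms(2)[OF L_subseq] by blast
  have "lexle wle (L m A) (L m B)" using LT[OF F(2) L_ge[OF F(1)]] .
  then show ?thesis using K[OF assms(1)] by simp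
qed

lemma wless_snoc: "wless A (A @ [n])"
proof (induction "length A" arbitrary: A rule: less_induct)
  case less
  define B where "B = A @ [n]"
  define m where "m = Min (set B)"
  have fin: "finite (set B)" "set B \<noteq> {}" unfolding B_def by auto
  have mmin: "\<forall>x\<in>set (A @ B). m \<le> x" unfolding m_def using Min_le[OF fin(1)] unfolding B_def by auto
  have min: "m \<in> set B" unfolding m_def using Min_in[OF fin] .
  define C where "C = L m A"
  have sC: "subseq C (pieces m A)" unfolding C_def by (rule L_subseq)
  show ?case unfolding B_def[symmetric]
  proof (cases "n = m")
    case True
    have pB: "pieces m B = pieces m A @ [[]]" unfolding B_def True by (rule pieces_snoc_eq)
    show "wless A B"
    proof (rule wless_witness[OF mmin, of "C @ [[]]"])
      show "subseq (C @ [[]]) (pieces m B)" unfolding pB using sC by simp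
      show "lexle wle (L m A) (C @ [[]])" unfolding C_def by (rule lexle_append_self) simp
      show "\<not> lexle wle (C @ [[]]) (L m A)" unfolding C_def by (rule not_lexle_append_self) simp
    qed
  next
    case False
    then have mA: "m \<in> set A" using min unfolding B_def by auto
    define ps where "ps = pieces m A"
    define x where "x = last ps"
    define bp where "bp = butlast ps"
    have ps: "ps = bp @ [x]" unfolding x_def bp_def ps_def by simp
    have pB: "pieces m B = bp @ [x @ [n]]" unfolding B_def x_def bp_def ps_def
      using pieces_snoc_neq False by simp
    have "x \<in> set (pieces m A)" unfolding ps_def[symmetric] x_def
      using last_in_set[of ps] pieces_ne[of m A] unfolding ps_def by simp
    then have "length x < length A" using pieces_length mA by blast
    then have xx: "wless x (x @ [n])" using less by blast
    from subseq_snoc_cases[OF sC[unfolded ps_def[symmetric] ps]]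
    show "wless A B"
    proof
      assume a: "subseq C bp"
      show ?thesis
      proof (rule wless_witness[OF mmin, of "C @ [x @ [n]]"])
        show "subseq (C @ [x @ [n]]) (pieces m B)" unfolding pB using a by simp
        show "lexle wle (L m A) (C @ [x @ [n]])" unfolding C_def by (rule lexle_append_self) simp
        show "\<not> lexle wle (C @ [x @ [n]]) (L m A)" unfolding C_def by (rule not_lexle_append_self) simp
      qed
    next
      assume "\<exists>E'. C = E' @ [x] \<and> subseq E' bp"
      then obtain E' where E': "C = E' @ [x]" "subseq E' bp" by blast
      show ?thesis
      proof (rule wless_witness[OF mmin, of "E' @ [x @ [n]]"])
        show "subseq (E' @ [x @ [n]]) (pieces m B)" unfolding pB using E'(2) by simp
        show "lexle wle (L m A) (E' @ [x @ [n]])" unfolding C_def[symmetric] E'(1) lexle_snoc1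
          using xx unfolding wless_def by simp
        show "\<not> lexle wle (E' @ [x @ [n]]) (L m A)" unfolding C_def[symmetric] E'(1) lexle_snoc1
          using xx unfolding wless_def by simp
      qed
    qed
  qed
qed

lemma wle_snoc: "wle A (A @ [n])"
  using wless_snoc unfolding wless_def by blast


lemma subseq_snoc_mono: "subseq E xs \<Longrightarrow> subseq E (xs @ [y])"
  by (rule subseq_rev_drop_many)

lemma wle_snoc_mono: "k \<le> j \<Longrightarrow> wle (A @ [k]) (A @ [j])"
proof (induction "length A" arbitrary: A rule: less_induct)
  case less
  show ?case
  proof (cases "k = j")
    case True then show ?thesis by simp
  next
    case False
    then have kj: "k < j" using less.prems by simp
    define ps where "ps = pieces k A"
    show ?thesis
    proof (cases "\<forall>x\<in>set A. k \<le> x")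
      case True
      define m where "m = k"
      have mmin: "\<forall>x\<in>set ((A @ [k]) @ (A @ [j])). m \<le> x" using True kj unfolding m_def by auto
      define ps where "ps = pieces m A"
      define x where "x = last ps"
      define bp where "bp = butlast ps"
      have ps: "ps = bp @ [x]" unfolding x_def bp_def ps_def by simp
      have p1: "pieces m (A @ [k]) = (bp @ [x]) @ [[]]" unfolding m_def
        using pieces_snoc_eq[of k A] ps unfolding ps_def m_def by simp
      have p2: "pieces m (A @ [j]) = bp @ [x @ [j]]" unfolding x_def bp_def ps_def
        using pieces_snoc_neq[of j m A] kj unfolding m_def by simp
      have xx: "wless x (x @ [j])" by (rule wless_snoc)
      show ?thesis
      proof (rule wle_witness[OF mmin])
        fix E assume "subseq E (pieces m (A @ [k]))"
        then have E: "subseq E ((bp @ [x]) @ [[]])" unfolding p1 .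
        show "\<exists>F. subseq F (pieces m (A @ [j])) \<and> lexle wle E F"
          unfolding p2
        proof (cases "subseq E (bp @ [x])")
          case True
          from subseq_snoc_cases[OF True] show "\<exists>F. subseq F (bp @ [x @ [j]]) \<and> lexle wle E F"
          proof
            assume "subseq E bp"
            then show ?thesis by (intro exI[of _ E]) (simp add: subseq_snoc_mono)
          next
            assume "\<exists>E'. E = E' @ [x] \<and> subseq E' bp"
            then obtain E' where E': "E = E' @ [x]" "subseq E' bp" by blast
            show ?thesis
              apply (intro exI[of _ "E' @ [x @ [j]]"])
              using E' xx unfolding wless_def by (simp add: lexle_snoc1)
          qed
        next
          case False
          then obtain E'' where E'': "E = E'' @ [[]]" "subseq E'' (bp @ [x])"
            using subseq_snoc_cases[OF E] by blast
          from subseq_snoc_cases[OF E''(2)] show "\<exists>F. subseq F (bp @ [x @ [j]]) \<and> lexle wle E F"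
          proof
            assume "subseq E'' bp"
            then show ?thesis
              apply (intro exI[of _ "E'' @ [x @ [j]]"])
              using E''(1) wle_Nil_le by (simp add: lexle_snoc1)
          next
            assume "\<exists>E'. E'' = E' @ [x] \<and> subseq E' bp"
            then obtain E' where E': "E'' = E' @ [x]" "subseq E' bp" by blast
            have "lexle wle (E' @ [x, []]) (E' @ [x @ [j]])" using lexle_snoc2[OF xx] .
            then show ?thesis
              apply (intro exI[of _ "E' @ [x @ [j]]"])
              using E''(1) E' by simp
          qed
        qed
      qed
    next
      case False
      then obtain s where s: "s \<in> set A" "s < k" by auto
      define m where "m = Min (set A)"
      have fin: "finite (set A)" "set A \<noteq> {}" using s by auto
      have mA: "m \<in> set A" unfolding m_def using Min_in[OF fin] .
      have mle: "\<forall>x\<in>set A. m \<le> x" unfolding m_def using Min_le[OF fin(1)] by blast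
      have mk: "m < k" using mle s by force
      have mmin: "\<forall>x\<in>set ((A @ [k]) @ (A @ [j])). m \<le> x" using mle mk kj by auto
      define ps where "ps = pieces m A"
      define x where "x = last ps"
      define bp where "bp = butlast ps"
      have p1: "pieces m (A @ [k]) = bp @ [x @ [k]]" unfolding x_def bp_def ps_def
        using pieces_snoc_neq[of k m A] mk by simp
      have p2: "pieces m (A @ [j]) = bp @ [x @ [j]]" unfolding x_def bp_def ps_def
        using pieces_snoc_neq[of j m A] mk kj by simp
      have "x \<in> set (pieces m A)" unfolding x_def
        using last_in_set[of ps] pieces_ne[of m A] unfolding ps_def by simp
      then have "length x < length A" using pieces_length mA by blast
      then have xx: "wle (x @ [k]) (x @ [j])" using less by blast
      show ?thesis
      proof (rule wle_witness[OF mmin])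
        fix E assume "subseq E (pieces m (A @ [k]))"
        then have E: "subseq E (bp @ [x @ [k]])" unfolding p1 .
        from subseq_snoc_cases[OF E] show "\<exists>F. subseq F (pieces m (A @ [j])) \<and> lexle wle E F"
        proof
          assume "subseq E bp"
          then show ?thesis by (intro exI[of _ E]) (simp add: subseq_snoc_mono p2)
        next
          assume "\<exists>E'. E = E' @ [x @ [k]] \<and> subseq E' bp"
          then obtain E' where E': "E = E' @ [x @ [k]]" "subseq E' bp" by blast
          show ?thesis
            apply (intro exI[of _ "E' @ [x @ [j]]"])
            using E' xx by (simp add: lexle_snoc1 p2)
        qed
      qed
    qed
  qed
qed


lemma below_single: "\<forall>s\<in>set x. s < c \<Longrightarrow> wless x [c]"
proof (induction "length x" arbitrary: x rule: less_induct)
  case less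
  show ?case
  proof (cases "x = []")
    case True then show ?thesis using wless_Nil by simp
  next
    case False
    define m where "m = Min (set x)"
    have fin: "finite (set x)" "set x \<noteq> {}" using False by auto
    have min: "m \<in> set x" unfolding m_def using Min_in[OF fin] .
    have mle: "\<forall>y\<in>set x. m \<le> y" unfolding m_def using Min_le[OF fin(1)] by blast
    have mc: "m < c" using less.prems min by blast
    have mmin: "\<forall>y\<in>set (x @ [c]). m \<le> y" using mle mc by auto
    have mmin': "\<forall>y\<in>set ([c] @ x). m \<le> y" using mle mc by auto
    have Lc: "L m [c] = [[c]]" using L_single[of m "[c]"] mc by simp
    obtain d D' where d: "L m x = d # D'" using L_ne[of m x] by (cases "L m x") auto
    have "d \<in> set (pieces m x)" using L_elem[of d m x] d by simp
    then have "length d < length x" "set d \<subseteq> set x" using pieces_length pieces_set min by blast+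
    then have "wless d [c]" using less by blast
    then have 1: "lexle wle (L m x) (L m [c])" "\<not> lexle wle (L m [c]) (L m x)"
      unfolding Lc d wless_def by (simp_all add: strict_def eqv_def)
    show ?thesis unfolding wless_def using K[OF mmin] K[OF mmin'] 1 by simp
  qed
qed

lemma above_single: "\<exists>s\<in>set x. c \<le> s \<Longrightarrow> wle [c] x"
proof (induction "length x" arbitrary: x rule: less_induct)
  case less
  then obtain s where s: "s \<in> set x" "c \<le> s" by blast
  have xne: "x \<noteq> []" using s by auto
  define m where "m = Min (set x)"
  have fin: "finite (set x)" "set x \<noteq> {}" using xne by auto
  have min: "m \<in> set x" unfolding m_def using Min_in[OF fin] .
  have mle: "\<forall>y\<in>set x. m \<le> y" unfolding m_def using Min_le[OF fin(1)] by blast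
  show ?case
  proof (cases "m < c")
    case True
    have mmin: "\<forall>y\<in>set ([c] @ x). m \<le> y" using mle True by auto
    have Lc: "L m [c] = [[c]]" using L_single[of m "[c]"] True by simp
    have "s \<noteq> m" using s True by simp
    then obtain P where P: "P \<in> set (pieces m x)" "s \<in> set P" using piece_member[OF s(1)] by blast
    have "length P < length x" using pieces_length[OF P(1)] min by blast
    then have "wle [c] P" using less P(2) s(2) by blast
    then have 1: "lexle wle [[c]] [P]" by (rule lexle_Cons_mono) simp
    have "subseq [P] (pieces m x)" using P(1) by (simp add: subseq_singleton_left)
    then have "lexle wle [P] (L m x)" by (rule L_ge)
    then have "lexle wle (L m [c]) (L m x)" unfolding Lc using LT[OF 1] by blast
    then show ?thesis using K[OF mmin] by simp
  next
    case False
    have cmin: "\<forall>y\<in>set ([c] @ x). c \<le> y" using mle False by auto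
    have pc: "pieces c [c] = [[], []]" using pieces_snoc_eq[of c "[]"] by simp
    have nn: "noninc wle [[], []]" by simp
    have 1: "lexle wle (L c [c]) [[], []]"
      using noninc_ge_subseq[OF tp_wle _ nn, of "L c [c]"] L_subseq[of c "[c]"] unfolding pc by simp
    have 2: "lexle wle [[], []] (L c x)"
    proof (cases "c \<in> set x")
      case True
      have "length (pieces c x) \<ge> 2" using pieces_len2[OF True] .
      then obtain p1 p2 ps where ps: "pieces c x = p1 # p2 # ps"
        by (metis One_nat_def Suc_1 Suc_le_length_iff)
      have "lexle wle [[], []] (p1 # p2 # ps)"
        by (intro lexle_Cons_mono wle_Nil_le) simp
      moreover have "lexle wle (pieces c x) (L c x)" by (rule L_ge) simp
      ultimately show ?thesis using LT ps by metis
    next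
      case False
      then have "L c x = [x]" by (rule L_single)
      then show ?thesis using wless_Nil[OF xne] by (simp add: strict_def wless_def)
    qed
    show ?thesis using K[OF cmin] LT[OF 1 2] by simp
  qed
qed

lemma below_single_iff: "wless x [c] \<longleftrightarrow> (\<forall>s\<in>set x. s < c)"
  using below_single above_single unfolding wless_def by (meson not_le)


section \<open>normal forms\<close>

lemma noninc_append_left: "noninc r (xs @ ys) \<Longrightarrow> noninc r xs"
  unfolding noninc_def by (metis Suc_lessD length_append nth_append trans_less_add1)

lemma noninc_snoc: "noninc r (xs @ [b]) \<longleftrightarrow> noninc r xs \<and> (xs \<noteq> [] \<longrightarrow> r b (last xs))"
proof (induction xs rule: induct_list012)
  case 1 then show ?case by simp
next
  case (2 x) then show ?case by simp
next
  case (3 x y zs)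
  then show ?case by simp
qed

lemma NF_dest:
  assumes "A \<in> NF" "A \<noteq> []"
  shows "noninc wle (pieces (Min (set A)) A) \<and> (\<forall>P\<in>set (pieces (Min (set A)) A). P \<in> NF)"
  using assms by (cases rule: NF.cases) (auto simp: noninc_def)

lemma NF_intro:
  assumes "A \<noteq> []" "noninc wle (pieces (Min (set A)) A)" "\<forall>P\<in>set (pieces (Min (set A)) A). P \<in> NF"
  shows "A \<in> NF"
  using assms by (intro NF_step) (auto simp: noninc_def)

lemma L_noninc_equiv:
  assumes "noninc wle (pieces m P)"
  shows "lexle wle (L m P) (pieces m P)" "lexle wle (pieces m P) (L m P)"
  using noninc_ge_subseq[OF tp_wle _ assms L_subseq] L_ge[of "pieces m P" m P] by auto

lemma lexeq_len: "lexle r xs ys \<Longrightarrow> lexle r ys xs \<Longrightarrow> length xs = length ys"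
  using lexle_antisym_all2 list_all2_lengthD by blast

lemma min_facts:
  assumes "A \<noteq> []"
  shows "Min (set A) \<in> set A" "\<forall>x\<in>set A. Min (set A) \<le> x"
  using assms by auto

lemma NF_min_lt:
  assumes "A \<in> NF" "A \<noteq> []" "\<forall>x\<in>set B. Min (set A) < x"
  shows "\<not> wequiv A B"
proof
  assume eq: "wequiv A B"
  define m where "m = Min (set A)"
  have mA: "m \<in> set A" "\<forall>x\<in>set A. m \<le> x" using min_facts[OF assms(2)] unfolding m_def by auto
  have mmin: "\<forall>x\<in>set (A @ B). m \<le> x" "\<forall>x\<in>set (B @ A). m \<le> x"
    using mA assms(3) unfolding m_def by fastforce+
  have nc: "noninc wle (pieces m A)" using NF_dest[OF assms(1,2)] unfolding m_def by simp
  have LB: "L m B = [B]" using assms(3) L_single unfolding m_def by blast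
  have 1: "lexle wle (L m A) [B]" "lexle wle [B] (L m A)"
    using eq K[OF mmin(1)] K[OF mmin(2)] LB unfolding wequiv_def by auto
  have "lexle wle (pieces m A) [B]" using LT[OF L_noninc_equiv(2)[OF nc] 1(1)] .
  moreover have "lexle wle [B] (pieces m A)" using LT[OF 1(2) L_noninc_equiv(1)[OF nc]] .
  ultimately have "length (pieces m A) = 1" using lexeq_len by fastforce
  then show False using pieces_len2[OF mA(1)] by simp
qed

lemma wequiv_sym: "wequiv A B \<Longrightarrow> wequiv B A"
  unfolding wequiv_def by blast

lemma NF_unique: "A \<in> NF \<Longrightarrow> B \<in> NF \<Longrightarrow> wequiv A B \<Longrightarrow> A = B"
proof (induction "length A" arbitrary: A B rule: less_induct)
  case less
  show ?case
  proof (cases "A = []")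
    case True
    show ?thesis
    proof (rule ccontr)
      assume "A \<noteq> B"
      then have "B \<noteq> []" using True by simp
      moreover have "\<forall>x\<in>set A. Min (set B) < x" using True by simp
      ultimately show False using NF_min_lt[OF less.prems(2)] wequiv_sym[OF less.prems(3)] by blast
    qed
  next
    case Ane: False
    show ?thesis
    proof (cases "B = []")
      case True
      then have "\<forall>x\<in>set B. Min (set A) < x" by simp
      then show ?thesis using NF_min_lt[OF less.prems(1) Ane] less.prems(3) by blast
    next
      case Bne: False
      define a where "a = Min (set A)"
      define b where "b = Min (set B)"
      have aA: "a \<in> set A" "\<forall>x\<in>set A. a \<le> x" using min_facts[OF Ane] unfolding a_def by auto
      have bB: "b \<in> set B" "\<forall>x\<in>set B. b \<le> x" using min_facts[OF Bne] unfolding b_def by auto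
      have "a = b"
      proof (rule ccontr)
        assume "a \<noteq> b"
        then have "a < b \<or> b < a" by arith
        then show False
        proof
          assume "a < b"
          then have "\<forall>x\<in>set B. Min (set A) < x" using bB unfolding a_def by fastforce
          then show False using NF_min_lt[OF less.prems(1) Ane] less.prems(3) by blast
        next
          assume "b < a"
          then have "\<forall>x\<in>set A. Min (set B) < x" using aA unfolding b_def by fastforce
          then show False using NF_min_lt[OF less.prems(2) Bne] wequiv_sym[OF less.prems(3)] by blast
        qed
      qed
      have mmin: "\<forall>x\<in>set (A @ B). a \<le> x" "\<forall>x\<in>set (B @ A). a \<le> x" using aA bB \<open>a = b\<close> by auto
      have ncA: "noninc wle (pieces a A)" and nfA: "\<forall>P\<in>set (pieces a A). P \<in> NF"
        using NF_dest[OF less.prems(1) Ane] unfolding a_def by auto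
      have ncB: "noninc wle (pieces a B)" and nfB: "\<forall>P\<in>set (pieces a B). P \<in> NF"
        using NF_dest[OF less.prems(2) Bne] unfolding b_def \<open>a = b\<close> by auto
      have 1: "lexle wle (L a A) (L a B)" "lexle wle (L a B) (L a A)"
        using less.prems(3) K[OF mmin(1)] K[OF mmin(2)] unfolding wequiv_def by auto
      have "lexle wle (pieces a A) (pieces a B)"
        using LT[OF LT[OF L_noninc_equiv(2)[OF ncA] 1(1)] L_noninc_equiv(1)[OF ncB]] .
      moreover have "lexle wle (pieces a B) (pieces a A)"
        using LT[OF LT[OF L_noninc_equiv(2)[OF ncB] 1(2)] L_noninc_equiv(1)[OF ncA]] .
      ultimately have all2: "list_all2 (eqv wle) (pieces a A) (pieces a B)" by (rule lexle_antisym_all2)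
      have "pieces a A = pieces a B"
      proof (rule nth_equalityI)
        show len: "length (pieces a A) = length (pieces a B)" using all2 list_all2_lengthD by blast
        fix i assume i: "i < length (pieces a A)"
        have e: "wequiv (pieces a A ! i) (pieces a B ! i)"
          using all2 i unfolding list_all2_conv_all_nth wequiv_def eqv_def by auto
        have inA: "pieces a A ! i \<in> set (pieces a A)" using i by simp
        have inB: "pieces a B ! i \<in> set (pieces a B)" using i len by simp
        have "length (pieces a A ! i) < length A" using pieces_length[OF inA] aA by blast
        then show "pieces a A ! i = pieces a B ! i"
          using less.hyps e nfA inA nfB inB by blast
      qed
      then show ?thesis by (rule pieces_inj)
    qed
  qed
qed

lemma wequiv_trans: "wequiv A B \<Longrightarrow> wequiv B C \<Longrightarrow> wequiv A C"
  unfolding wequiv_def using wle_trans by blast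

lemma NF_exists: "\<exists>B. B \<in> NF \<and> wequiv B A \<and> set B \<subseteq> set A"
proof (induction "length A" arbitrary: A rule: less_induct)
  case less
  show ?case
  proof (cases "A = []")
    case True then show ?thesis by (intro exI[of _ "[]"]) (simp add: NF_Nil wequiv_def)
  next
    case False
    define m where "m = Min (set A)"
    have mA: "m \<in> set A" "\<forall>x\<in>set A. m \<le> x" using min_facts[OF False] unfolding m_def by auto
    define f where "f p = (SOME p'. p' \<in> NF \<and> wequiv p' p \<and> set p' \<subseteq> set p)" for p
    have f: "f p \<in> NF \<and> wequiv (f p) p \<and> set (f p) \<subseteq> set p" if p: "p \<in> set (pieces m A)" for p
    proof -
      have "length p < length A" using pieces_length[OF p] mA by blast
      then have "\<exists>p'. p' \<in> NF \<and> wequiv p' p \<and> set p' \<subseteq> set p" using less by blast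
      then show ?thesis unfolding f_def by (rule someI_ex)
    qed
    define C where "C = L m A"
    have Cne: "C \<noteq> []" unfolding C_def by (rule L_ne)
    have Cin: "\<forall>c\<in>set C. c \<in> set (pieces m A)" unfolding C_def using L_elem by blast
    have ncC: "noninc wle C" unfolding C_def by (rule lexmax_noninc[OF tp_wle _ L_max]) simp
    define C' where "C' = map f C"
    have all2: "list_all2 (eqv wle) C' C"
      unfolding C'_def list_all2_conv_all_nth using f Cin unfolding wequiv_def eqv_def by auto
    have lx: "lexle wle C' C" "lexle wle C C'" using all2_lexle[OF all2] all2_lexle'[OF all2] by auto
    have ncC': "noninc wle C'" unfolding noninc_def
    proof (intro allI impI)
      fix i assume i: "Suc i < length C'"
      then have i': "Suc i < length C" unfolding C'_def by simp
      have "wle (C ! Suc i) (C ! i)" using ncC i' unfolding noninc_def by blast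
      moreover have "wequiv (C' ! Suc i) (C ! Suc i)" "wequiv (C' ! i) (C ! i)"
        using f Cin i' unfolding C'_def by auto
      ultimately show "wle (C' ! Suc i) (C' ! i)" unfolding wequiv_def using wle_trans by blast
    qed
    have C'NF: "\<forall>P\<in>set C'. P \<in> NF" and C'm: "\<forall>P\<in>set C'. m \<notin> set P \<and> set P \<subseteq> set A"
      unfolding C'_def using f Cin pieces_set by fastforce+
    have C'ne: "C' \<noteq> []" using Cne unfolding C'_def by simp
    show ?thesis
    proof (cases "length C' = 1")
      case True
      then obtain B where B: "C' = [B]" by (metis One_nat_def length_0_conv length_Suc_conv)
      have BNF: "B \<in> NF" and mB: "m \<notin> set B" and sB: "set B \<subseteq> set A" using C'NF C'm B by auto
      have mmin: "\<forall>x\<in>set (A @ B). m \<le> x" "\<forall>x\<in>set (B @ A). m \<le> x" using mA sB by auto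
      have LB: "L m B = [B]" using L_single[OF mB] .
      have "wequiv B A" unfolding wequiv_def
        using K[OF mmin(1)] K[OF mmin(2)] LB lx B C_def by simp
      then show ?thesis using BNF sB by blast
    next
      case False
      have "length C' \<noteq> 0" using C'ne by simp
      then have len: "length C' \<ge> 2" using False by arith
      define B where "B = join m C'"
      have pB: "pieces m B = C'" unfolding B_def using pieces_join C'ne C'm by blast
      have mB: "m \<in> set B" unfolding B_def using join_set2[OF len] .
      have sB: "set B \<subseteq> set A" unfolding B_def using join_set[of m C'] C'm mA by blast
      have Bne: "B \<noteq> []" using mB by auto
      have minB: "Min (set B) = m" by (rule Min_eqI) (use mB sB mA in auto)
      have BNF: "B \<in> NF" by (rule NF_intro[OF Bne]) (use pB minB ncC' C'NF in auto)
      have mmin: "\<forall>x\<in>set (A @ B). m \<le> x" "\<forall>x\<in>set (B @ A). m \<le> x" using mA sB by auto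
      have e1: "lexle wle (L m B) C'" "lexle wle C' (L m B)"
        using L_noninc_equiv[of m B] pB ncC' by auto
      have "wle B A" using K[OF mmin(2)] LT[OF e1(1) lx(1)] C_def by simp
      moreover have "wle A B" using K[OF mmin(1)] LT[OF lx(2) e1(2)] C_def by simp
      ultimately show ?thesis using BNF sB unfolding wequiv_def by blast
    qed
  qed
qed

lemma diamond_prop: "diamond n z \<in> NF \<and> wequiv (diamond n z) (z @ [n])"
proof -
  have "\<exists>!B. B \<in> NF \<and> wequiv B (z @ [n])"
  proof -
    obtain B where B: "B \<in> NF" "wequiv B (z @ [n])" using NF_exists by blast
    moreover have "B' = B" if "B' \<in> NF" "wequiv B' (z @ [n])" for B'
      using NF_unique[OF that(1) B(1)] wequiv_trans[OF that(2) wequiv_sym[OF B(2)]] by blast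
    ultimately show ?thesis by blast
  qed
  then show ?thesis unfolding diamond_def by (rule theI')
qed


lemma NF_butlast: "y \<in> NF \<Longrightarrow> y \<noteq> [] \<Longrightarrow> butlast y \<in> NF"
proof (induction "length y" arbitrary: y rule: less_induct)
  case less
  define ys where "ys = butlast y"
  define k where "k = last y"
  have y: "y = ys @ [k]" unfolding ys_def k_def using less.prems(2) by simp
  define m where "m = Min (set y)"
  have my: "m \<in> set y" "\<forall>x\<in>set y. m \<le> x" using min_facts[OF less.prems(2)] unfolding m_def by auto
  have nc: "noninc wle (pieces m y)" and nf: "\<forall>P\<in>set (pieces m y). P \<in> NF"
    using NF_dest[OF less.prems] unfolding m_def by auto
  have len2: "length (pieces m y) \<ge> 2" using pieces_len2[OF my(1)] .
  have minys: "Min (set ys) = m" if "m \<in> set ys"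
    by (rule Min_eqI) (use that my y in auto)
  show ?case unfolding ys_def[symmetric]
  proof (cases "k = m")
    case True
    define Q where "Q = pieces m ys"
    have ps: "pieces m y = Q @ [[]]" unfolding y Q_def True by (rule pieces_snoc_eq)
    have ncQ: "noninc wle Q" using nc unfolding ps by (rule noninc_append_left)
    have nfQ: "\<forall>P\<in>set Q. P \<in> NF" using nf unfolding ps by simp
    show "ys \<in> NF"
    proof (cases "length Q \<ge> 2")
      case True
      have mys: "m \<in> set ys" using pieces_len2_in True unfolding Q_def by blast
      then have ne: "ys \<noteq> []" by auto
      show ?thesis by (rule NF_intro[OF ne]) (use minys[OF mys] ncQ nfQ Q_def in auto)
    next
      case False
      then have "length Q = 1" using pieces_len_ge[of m ys] unfolding Q_def by simp
      then obtain p where p: "Q = [p]" by (metis One_nat_def length_0_conv length_Suc_conv)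
      have "ys = join m Q" unfolding Q_def by (simp add: join_pieces)
      then have "ys = p" using p by simp
      then show ?thesis using nfQ p by simp
    qed
  next
    case False
    define Q where "Q = pieces m ys"
    define q where "q = last Q"
    define bq where "bq = butlast Q"
    have Q: "Q = bq @ [q]" unfolding bq_def q_def Q_def by simp
    have ps: "pieces m y = bq @ [q @ [k]]" unfolding y bq_def q_def Q_def
      using pieces_snoc_neq[OF False] by simp
    have qk: "q @ [k] \<in> set (pieces m y)" unfolding ps by simp
    have "length (q @ [k]) < length y" using pieces_length[OF qk] my by blast
    moreover have "q @ [k] \<in> NF" using nf qk by blast
    ultimately have qNF: "q \<in> NF" using less.hyps[of "q @ [k]"] by simp
    have "length Q \<ge> 2" using len2 unfolding ps Q by simp
    then have mys: "m \<in> set ys" using pieces_len2_in unfolding Q_def by blast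
    then have ne: "ys \<noteq> []" by auto
    have bqne: "bq \<noteq> []" using \<open>length Q \<ge> 2\<close> unfolding Q by auto
    have n1: "noninc wle bq" "wle (q @ [k]) (last bq)" using nc bqne unfolding ps noninc_snoc by auto
    have "wle q (last bq)" using wle_trans[OF wle_snoc n1(2)] .
    then have ncQ: "noninc wle Q" unfolding Q noninc_snoc using n1(1) by simp
    have nfQ: "\<forall>P\<in>set Q. P \<in> NF" using nf qNF unfolding ps Q by simp
    show "ys \<in> NF" by (rule NF_intro[OF ne]) (use minys[OF mys] ncQ nfQ Q_def in auto)
  qed
qed

section \<open>the defining formula\<close>

definition clf :: "nat \<Rightarrow> nat \<Rightarrow> fform" where
  "clf v z = FAnd (FEx z (FLess (FVar z) (FVar v)))
     (FNot (FEx z (FAnd (FLess (FVar z) (FVar v)) (FNot (FLess (FD3 (FVar z)) (FVar v))))))"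

definition phi :: fform where
  "phi = FEx 1 (FAnd (clf 1 2) (FAnd (FLess (FVar 0) (FVar 1))
           (FNot (FEx 3 (FAnd (clf 3 2) (FLess (FVar 3) (FVar 1)))))))"

lemma fvars_phi: "fvars phi \<subseteq> {0}"
  unfolding phi_def clf_def by auto

definition clM :: "word set \<Rightarrow> word \<Rightarrow> bool" where
  "clM M y \<longleftrightarrow> (\<exists>z\<in>M. wless z y) \<and> \<not> (\<exists>z\<in>M. wless z y \<and> \<not> wless (diamond 3 z) y)"

lemma sat_clf: "z \<noteq> v \<Longrightarrow> sat M wless f1 (diamond 3) e (clf v z) = clM M (e v)"
  unfolding clf_def clM_def by simp

lemma sat_phi: "sat M wless (diamond 1) (diamond 3) e phi \<longleftrightarrow>
   (\<exists>y\<in>M. clM M y \<and> wless (e 0) y \<and> \<not> (\<exists>y'\<in>M. clM M y' \<and> wless y' y))"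
  unfolding phi_def by (simp add: sat_clf)


lemma enat_le3: "enat s \<le> 3 \<longleftrightarrow> s < 4"
  by (simp add: numeral_eq_enat) arith

lemma WN3_iff: "x \<in> WN 3 \<longleftrightarrow> x \<in> NF \<and> wless x [4]"
  unfolding WN_def W_def below_single_iff using enat_le3 by auto

lemma wless_wle_trans: "wless a b \<Longrightarrow> wle b c \<Longrightarrow> wless a c"
  unfolding wless_def using wle_trans by blast

lemma wle_wless_trans: "wle a b \<Longrightarrow> wless b c \<Longrightarrow> wless a c"
  unfolding wless_def using wle_trans by blast

lemma main_sem:
  assumes a4: "enat 4 \<le> \<alpha>" and xM: "x \<in> WN \<alpha>"
  shows "x \<in> WN 3 \<longleftrightarrow> (\<exists>y\<in>WN \<alpha>. clM (WN \<alpha>) y \<and> wless x y \<and> \<not> (\<exists>y'\<in>WN \<alpha>. clM (WN \<alpha>) y' \<and> wless y' y))"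
proof -
  let ?M = "WN \<alpha>"
  have NilM: "[] \<in> ?M" unfolding WN_def W_def by (simp add: NF_Nil)
  have p4: "pieces 4 [4] = [[], []]" using pieces_snoc_eq[of 4 "[]"] by simp
  have c4NF: "[4] \<in> NF" by (rule NF_intro) (simp_all add: p4 NF_Nil)
  have c4M: "[4] \<in> ?M" unfolding WN_def W_def using c4NF a4 by simp
  have cl4: "clM ?M [4]" unfolding clM_def
  proof
    show "\<exists>z\<in>?M. wless z [4]" using NilM wless_Nil[of "[4]"] by blast
    show "\<not> (\<exists>z\<in>?M. wless z [4] \<and> \<not> wless (diamond 3 z) [4])"
    proof
      assume "\<exists>z\<in>?M. wless z [4] \<and> \<not> wless (diamond 3 z) [4]"
      then obtain z where z: "wless z [4]" "\<not> wless (diamond 3 z) [4]" by blast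
      have "\<forall>s\<in>set (z @ [3]). s < 4" using z(1) unfolding below_single_iff by auto
      then have "wless (z @ [3]) [4]" using below_single_iff by blast
      moreover have "wle (diamond 3 z) (z @ [3])" using diamond_prop[of 3 z] unfolding wequiv_def by blast
      ultimately show False using z(2) wle_wless_trans by blast
    qed
  qed
  have notcl: "\<not> clM ?M y" if yM: "y \<in> ?M" and y4: "wless y [4]" for y
  proof (cases "y = []")
    case True
    then show ?thesis unfolding clM_def wless_def using wle_Nil_le by blast
  next
    case False
    define z where "z = butlast y"
    define k where "k = last y"
    have y: "y = z @ [k]" unfolding z_def k_def using False by simp
    have k3: "k \<le> 3" using y4 unfolding below_single_iff y by auto
    have zNF: "z \<in> NF" unfolding z_def using NF_butlast yM False unfolding WN_def by blast
    have zM: "z \<in> ?M" using zNF yM unfolding WN_def W_def y by auto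
    have zy: "wless z y" unfolding y by (rule wless_snoc)
    have "wle y (z @ [3])" unfolding y using wle_snoc_mono[OF k3] .
    moreover have "wle (z @ [3]) (diamond 3 z)" using diamond_prop[of 3 z] unfolding wequiv_def by blast
    ultimately have "wle y (diamond 3 z)" by (rule wle_trans)
    then have "\<not> wless (diamond 3 z) y" unfolding wless_def by blast
    then show ?thesis unfolding clM_def using zM zy by blast
  qed
  show ?thesis
  proof
    assume "x \<in> WN 3"
    then have x4: "wless x [4]" using WN3_iff by blast
    have "\<not> (\<exists>y'\<in>?M. clM ?M y' \<and> wless y' [4])" using notcl by blast
    then show "\<exists>y\<in>?M. clM ?M y \<and> wless x y \<and> \<not> (\<exists>y'\<in>?M. clM ?M y' \<and> wless y' y)"
      using c4M cl4 x4 by blast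
  next
    assume "\<exists>y\<in>?M. clM ?M y \<and> wless x y \<and> \<not> (\<exists>y'\<in>?M. clM ?M y' \<and> wless y' y)"
    then obtain y where y: "y \<in> ?M" "clM ?M y" "wless x y" "\<not> (\<exists>y'\<in>?M. clM ?M y' \<and> wless y' y)"
      by blast
    have "\<not> wless y [4]" using notcl y(1,2) by blast
    then have "wle [4] y" unfolding wless_def using wle_total by blast
    moreover have "\<not> wless [4] y" using y(4) c4M cl4 by blast
    ultimately have "wle y [4]" unfolding wless_def by blast
    then have "wless x [4]" using wless_wle_trans[OF y(3)] by blast
    moreover have "x \<in> NF" using xM unfolding WN_def by blast
    ultimately show "x \<in> WN 3" using WN3_iff by blast
  qed
qed

theorem lemma5:
  fixes \<alpha> :: enat
  assumes "3 \<le> \<alpha>"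
  shows "fo_definable (WN \<alpha>) wless (diamond 1) (diamond 3) (WN 3)"
proof (cases "\<alpha> = 3")
  case True
  show ?thesis unfolding fo_definable_def True
    by (rule exI[of _ "FEq (FVar 0) (FVar 0)"]) simp
next
  case False
  have a4: "enat 4 \<le> \<alpha>"
  proof (cases \<alpha>)
    case (enat n)
    then have "3 \<le> n" "n \<noteq> 3" using assms False by (simp_all add: numeral_eq_enat)
    then show ?thesis using enat by simp
  next
    case infinity then show ?thesis by simp
  qed
  show ?thesis unfolding fo_definable_def
  proof (intro exI[of _ phi] conjI allI impI)
    show "fvars phi \<subseteq> {0}" by (rule fvars_phi)
    fix e :: "nat \<Rightarrow> word" assume "\<forall>x. e x \<in> WN \<alpha>"
    then have "e 0 \<in> WN \<alpha>" by blast
    then show "e 0 \<in> WN 3 \<longleftrightarrow> sat (WN \<alpha>) wless (diamond 1) (diamond 3) e phi"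
      unfolding sat_phi using main_sem[OF a4] by blast
  qed
qed


end
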